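(* Let $n \ge 1$, let $\mathbb{S}^{n-1} = \{x \in \mathbb{R}^n : \sum_{i=1}^n x_i^2 = 1\}$ with its standard rotationally invariant surface measure $d\sigma$, and define \[ \mathrm{Emin}(n) = \frac{1}{\mathrm{vol}\,\mathbb{S}^{n-1}} \int_{\mathbb{S}^{n-1}} \min_{1\le i\le n} |x_i| \, d\sigma . \] Then \[ \mathrm{Emin}(n) = \frac{\Gamma\left(\frac{n}{2}\right)}{\Gamma\left(\frac{n+1}{2}\right)} \int_0^\infty \left(1 - \frac{1}{\sqrt{\pi}}\int_{-y}^{y} e^{-x^2}\,dx\right)^n dy . \]
   Context: $\mathrm{vol}\,\mathbb{S}^{n-1}$ denotes the total surface measure of the unit sphere, so $\mathrm{Emin}(n)$ is the average over the unit sphere of the smallest absolute value of a coordinate. *)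

theory Defs
  imports "HOL-Analysis.Analysis"
begin

text \<open>Rotation-invariant surface measure on the unit sphere of a Euclidean space,
  defined (as usual, e.g. cone-measure construction) by
  sigma(A) = n * lebesgue-volume of the cone {t x | 0 < t <= 1, x in A}.
  This is the standard surface (Hausdorff) measure on the sphere.\<close>
definition sphere_surface :: "('a::euclidean_space) measure" where
  "sphere_surface =
     measure_of (sphere 0 1) (sets (restrict_space borel (sphere 0 1)))
       (\<lambda>A. of_nat DIM('a) * emeasure lborel {t *\<^sub>R x | t x. t \<in> {0<..1} \<and> x \<in> A})"

definition Emin :: "('n::finite) itself \<Rightarrow> real" where
  "Emin _ = (integral\<^sup>L (sphere_surface :: (real^'n) measure) (\<lambda>x. Min ((\<lambda>i. \<bar>x $ i\<bar>) ` UNIV)))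
            / measure (sphere_surface :: (real^'n) measure) (sphere 0 1)"

end

theory Submission
  imports Defs "HOL-Probability.Probability" "HOL-Real_Asymp.Real_Asymp"
begin

lemma sgn_meas: "(sgn :: 'a::euclidean_space \<Rightarrow> 'a) \<in> borel_measurable borel"
  unfolding sgn_div_norm by measurable

lemma cone_eq:
  fixes A :: "'a::euclidean_space set"
  assumes "A \<subseteq> sphere 0 1"
  shows "sgn -` A \<inter> (cball 0 1 - {0}) = {t *\<^sub>R x | t x. t \<in> {0<..1} \<and> x \<in> A}"
proof (intro equalityI subsetI)
  fix x assume x: "x \<in> sgn -` A \<inter> (cball 0 1 - {0})"
  then have "x = norm x *\<^sub>R sgn x" "norm x \<in> {0<..1}" "sgn x \<in> A"
    by (auto simp: sgn_div_norm)
  then show "x \<in> {t *\<^sub>R x | t x. t \<in> {0<..1} \<and> x \<in> A}" by blast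
next
  fix x assume "x \<in> {t *\<^sub>R x | t x. t \<in> {0<..1} \<and> x \<in> A}"
  then obtain t y where x: "x = t *\<^sub>R y" "t \<in> {0<..1}" "y \<in> A" by blast
  with assms have ny: "norm y = 1" by auto
  then have "sgn y = y" by (simp add: sgn_div_norm)
  with x ny show "x \<in> sgn -` A \<inter> (cball 0 1 - {0})"
    by (auto simp: sgn_scaleR)
qed

lemma sphere_surface_eq:
  "(sphere_surface :: 'a::euclidean_space measure) =
     density (distr (restrict_space lborel (cball 0 1 - {0})) (restrict_space borel (sphere 0 1)) sgn)
       (\<lambda>_. of_nat DIM('a))"
  (is "_ = ?D")
proof -
  let ?S = "sphere (0::'a) 1" and ?P = "cball (0::'a) 1 - {0}"
  have meas: "sgn \<in> restrict_space lborel ?P \<rightarrow>\<^sub>M restrict_space borel ?S"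
  proof (rule measurable_restrict_space2)
    show "sgn \<in> space (restrict_space lborel ?P) \<rightarrow> ?S"
      by (auto simp: space_restrict_space norm_sgn)
    have "sgn \<in> lborel \<rightarrow>\<^sub>M borel" using sgn_meas by simp
    then show "sgn \<in> restrict_space lborel ?P \<rightarrow>\<^sub>M borel"
      by (rule measurable_restrict_space1)
  qed
  have em: "emeasure ?D A = of_nat DIM('a) * emeasure lborel {t *\<^sub>R x | t x. t \<in> {0<..1} \<and> x \<in> A}"
    if A: "A \<in> sets (restrict_space borel ?S)" for A
  proof -
    have AS: "A \<subseteq> ?S" using A sets.sets_into_space by fastforce
    have "emeasure ?D A = of_nat DIM('a) * emeasure (restrict_space lborel ?P) (sgn -` A \<inter> ?P)"
      using A meas by (simp add: emeasure_density_const emeasure_distr space_restrict_space)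
    also have "emeasure (restrict_space lborel ?P) (sgn -` A \<inter> ?P) = emeasure lborel (sgn -` A \<inter> ?P)"
      by (rule emeasure_restrict_space) auto
    finally show ?thesis using cone_eq[OF AS] by simp
  qed
  have sa: "sigma_algebra ?S (sets (restrict_space borel ?S))"
    using sets.sigma_algebra_axioms[of "restrict_space borel ?S"] by (simp add: space_restrict_space)
  have "sphere_surface = measure_of ?S (sets (restrict_space borel ?S)) (emeasure ?D)"
    unfolding sphere_surface_def
  proof (rule measure_of_eq)
    show "sets (restrict_space borel ?S) \<subseteq> Pow ?S"
      using sets.sets_into_space[of _ "restrict_space borel ?S"] by (auto simp: space_restrict_space)
    fix a assume "a \<in> sigma_sets ?S (sets (restrict_space borel ?S))"
    then have "a \<in> sets (restrict_space borel ?S)" using sigma_algebra.sigma_sets_eq[OF sa] by simp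
    then show "of_nat DIM('a) * emeasure lborel {t *\<^sub>R x | t x. t \<in> {0<..1} \<and> x \<in> a} = emeasure ?D a"
      using em by simp
  qed
  also have "\<dots> = measure_of (space ?D) (sets ?D) (emeasure ?D)"
    by (simp add: space_restrict_space)
  also have "\<dots> = ?D" by (rule measure_of_of_measure)
  finally show ?thesis .
qed



lemma cball_borel[measurable]: "cball (c::'a::euclidean_space) r \<in> sets borel"
  by (simp add: borel_closed)


lemma scale_int:
  fixes F :: "'a::euclidean_space \<Rightarrow> ennreal"
  assumes F[measurable]: "F \<in> borel_measurable borel"
    and hom: "\<And>c x. c > 0 \<Longrightarrow> F (c *\<^sub>R x) = ennreal (c^k) * F x" and r: "r > 0"
  shows "(\<integral>\<^sup>+ x. F x * indicator (cball 0 r) x \<partial>lborel) =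
         ennreal (r^(DIM('a)+k)) * (\<integral>\<^sup>+ x. F x * indicator (cball 0 1) x \<partial>lborel)"
proof -
  have eq: "lborel = density (distr lborel borel (\<lambda>x::'a. 0 + r *\<^sub>R x)) (\<lambda>_. \<bar>r\<bar>^DIM('a))"
    by (rule lborel_affine) (use r in simp)
  have "(\<integral>\<^sup>+ x. F x * indicator (cball 0 r) x \<partial>lborel) =
        (\<integral>\<^sup>+ x. F x * indicator (cball 0 r) x \<partial>(density (distr lborel borel (\<lambda>x. 0 + r *\<^sub>R x)) (\<lambda>_. \<bar>r\<bar>^DIM('a))))"
    by (rule arg_cong[where f="\<lambda>M. nn_integral M (\<lambda>x. F x * indicator (cball 0 r) x)", OF eq])
  also have "\<dots> = (\<integral>\<^sup>+ x. ennreal (\<bar>r\<bar>^DIM('a)) * (F (r *\<^sub>R x) * indicator (cball 0 r) (r *\<^sub>R x)) \<partial>lborel)"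
    apply (subst nn_integral_density)
      apply simp
     apply simp
    apply (subst nn_integral_distr)
      apply simp
     apply simp
    apply simp
    done
  also have "\<dots> = (\<integral>\<^sup>+ x. ennreal (r^(DIM('a)+k)) * (F x * indicator (cball 0 1) x) \<partial>lborel)"
  proof (rule nn_integral_cong)
    fix x :: 'a
    have "r *\<^sub>R x \<in> cball 0 r \<longleftrightarrow> x \<in> cball 0 1"
      using r by (simp add: mult_le_cancel_left1)
    then show "ennreal (\<bar>r\<bar>^DIM('a)) * (F (r *\<^sub>R x) * indicator (cball 0 r) (r *\<^sub>R x)) =
               ennreal (r^(DIM('a)+k)) * (F x * indicator (cball 0 1) x)"
      using r by (simp add: hom indicator_def power_add ennreal_mult' mult_ac)
  qed
  also have "\<dots> = ennreal (r^(DIM('a)+k)) * (\<integral>\<^sup>+ x. F x * indicator (cball 0 1) x \<partial>lborel)"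
    by (rule nn_integral_cmult) simp
  finally show ?thesis .
qed

lemma tonelli_radial:
  fixes F :: "'a::euclidean_space \<Rightarrow> ennreal" and W :: "real \<Rightarrow> ennreal"
  assumes F[measurable]: "F \<in> borel_measurable borel" and W[measurable]: "W \<in> borel_measurable borel"
  shows "(\<integral>\<^sup>+ x. F x * (\<integral>\<^sup>+ r. W r * indicator (cball 0 r) x \<partial>lborel) \<partial>lborel) =
         (\<integral>\<^sup>+ r. W r * (\<integral>\<^sup>+ x. F x * indicator (cball 0 r) x \<partial>lborel) \<partial>lborel)"
proof -
  have m: "(\<lambda>(x, r). F x * (W r * indicator (cball 0 r) x)) \<in> borel_measurable (lborel \<Otimes>\<^sub>M lborel)"
  proof -
    have [measurable]: "Measurable.pred (borel \<Otimes>\<^sub>M borel) (\<lambda>x::'a\<times>real. fst x \<in> cball 0 (snd x))"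
      unfolding mem_cball_0 by measurable
    show ?thesis by measurable
  qed
  have "(\<integral>\<^sup>+ x. F x * (\<integral>\<^sup>+ r. W r * indicator (cball 0 r) x \<partial>lborel) \<partial>lborel) =
        (\<integral>\<^sup>+ x. (\<integral>\<^sup>+ r. F x * (W r * indicator (cball 0 r) x) \<partial>lborel) \<partial>lborel)"
    by (intro nn_integral_cong nn_integral_cmult[symmetric]) (simp add: indicator_def mem_cball)
  also have "\<dots> = (\<integral>\<^sup>+ r. (\<integral>\<^sup>+ x. F x * (W r * indicator (cball 0 r) x) \<partial>lborel) \<partial>lborel)"
    using lborel_pair.Fubini'[OF m] by simp
  also have "\<dots> = (\<integral>\<^sup>+ r. W r * (\<integral>\<^sup>+ x. F x * indicator (cball 0 r) x \<partial>lborel) \<partial>lborel)"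
  proof (intro nn_integral_cong)
    fix r
    have "(\<integral>\<^sup>+ x. F x * (W r * indicator (cball 0 r) x) \<partial>lborel) =
          (\<integral>\<^sup>+ x. W r * (F x * indicator (cball 0 r) x) \<partial>lborel)"
      by (simp add: mult_ac)
    also have "\<dots> = W r * (\<integral>\<^sup>+ x. F x * indicator (cball 0 r) x \<partial>lborel)"
      by (rule nn_integral_cmult) simp
    finally show "(\<integral>\<^sup>+ x. F x * (W r * indicator (cball 0 r) x) \<partial>lborel) =
          W r * (\<integral>\<^sup>+ x. F x * indicator (cball 0 r) x \<partial>lborel)" .
  qed
  finally show ?thesis .
qed

lemma radial:
  fixes F :: "'a::euclidean_space \<Rightarrow> ennreal" and W :: "real \<Rightarrow> ennreal"
  assumes F[measurable]: "F \<in> borel_measurable borel"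
    and hom: "\<And>c x. c > 0 \<Longrightarrow> F (c *\<^sub>R x) = ennreal (c^k) * F x"
    and W[measurable]: "W \<in> borel_measurable borel"
  shows "(\<integral>\<^sup>+ x. F x * (\<integral>\<^sup>+ r. W r * indicator {0..} r * indicator (cball 0 r) x \<partial>lborel) \<partial>lborel) =
         (\<integral>\<^sup>+ r. W r * indicator {0..} r * ennreal (r^(DIM('a)+k)) \<partial>lborel) *
         (\<integral>\<^sup>+ x. F x * indicator (cball 0 1) x \<partial>lborel)"
proof -
  let ?K = "\<integral>\<^sup>+ x. F x * indicator (cball 0 1) x \<partial>lborel"
  have "(\<integral>\<^sup>+ x. F x * (\<integral>\<^sup>+ r. W r * indicator {0..} r * indicator (cball 0 r) x \<partial>lborel) \<partial>lborel) =
        (\<integral>\<^sup>+ r. (W r * indicator {0..} r) * (\<integral>\<^sup>+ x. F x * indicator (cball 0 r) x \<partial>lborel) \<partial>lborel)"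
    by (rule tonelli_radial) simp_all
  also have "\<dots> = (\<integral>\<^sup>+ r. (W r * indicator {0..} r * ennreal (r^(DIM('a)+k))) * ?K \<partial>lborel)"
  proof (rule nn_integral_cong)
    fix r :: real
    consider "r < 0" | "r = 0" | "r > 0" by linarith
    then show "(W r * indicator {0..} r) * (\<integral>\<^sup>+ x. F x * indicator (cball 0 r) x \<partial>lborel) =
               (W r * indicator {0..} r * ennreal (r^(DIM('a)+k))) * ?K"
    proof cases
      case 2
      have "(\<integral>\<^sup>+ x. F x * indicator (cball 0 r) x \<partial>lborel) = (\<integral>\<^sup>+ x. 0 \<partial>(lborel::'a measure))"
      proof (rule nn_integral_cong_AE)
        show "AE x in lborel. F x * indicator (cball 0 r) x = 0"
          using 2 by (intro AE_I'[where N="{0}"]) (auto simp: indicator_def)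
      qed
      then show ?thesis using 2 by simp
    next
      case 3
      then show ?thesis using scale_int[OF F hom 3] by (simp add: mult_ac)
    qed simp
  qed
  also have "\<dots> = (\<integral>\<^sup>+ r. W r * indicator {0..} r * ennreal (r^(DIM('a)+k)) \<partial>lborel) * ?K"
    by (rule nn_integral_multc) simp
  finally show ?thesis .
qed



definition fmin :: "'a::euclidean_space \<Rightarrow> real" where
  "fmin x = Min ((\<lambda>b. \<bar>x \<bullet> b\<bar>) ` Basis)"

lemma fmin_nonneg: "0 \<le> fmin x"
  unfolding fmin_def by (auto simp: Min_ge_iff)

lemma fmin_le_norm: "fmin x \<le> norm x"
proof -
  obtain b :: 'a where b: "b \<in> Basis" using nonempty_Basis by blast
  have "fmin x \<le> \<bar>x \<bullet> b\<bar>" unfolding fmin_def using b by (intro Min_le) auto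
  also have "\<dots> \<le> norm x" using b by (rule Basis_le_norm)
  finally show ?thesis .
qed

lemma fmin_zero[simp]: "fmin (0::'a::euclidean_space) = 0"
  unfolding fmin_def by simp

lemma fmin_scale: "c \<ge> 0 \<Longrightarrow> fmin (c *\<^sub>R x) = c * fmin x"
proof -
  assume c: "c \<ge> 0"
  have "mono ((*) c)" using c by (auto simp: mono_def mult_left_mono)
  then have "c * fmin x = Min ((*) c ` (\<lambda>b. \<bar>x \<bullet> b\<bar>) ` Basis)"
    unfolding fmin_def by (rule mono_Min_commute) auto
  also have "\<dots> = fmin (c *\<^sub>R x)"
    unfolding fmin_def image_image using c by (simp add: abs_mult)
  finally show ?thesis by simp
qed

lemma fmin_meas[measurable]: "fmin \<in> borel_measurable borel"
  unfolding fmin_def by measurable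

lemma gauss_layer:
  "(\<integral>\<^sup>+ r. ennreal (2*r*exp(-r\<^sup>2)) * indicator {0..} r * indicator (cball 0 r) x \<partial>lborel) =
   ennreal (exp (-(norm (x::'a::euclidean_space))\<^sup>2))"
proof -
  have "(\<integral>\<^sup>+ r. ennreal (2*r*exp(-r\<^sup>2)) * indicator {0..} r * indicator (cball 0 r) x \<partial>lborel) =
        (\<integral>\<^sup>+ r. ennreal (2*r*exp(-r\<^sup>2)) * indicator {norm x..} r \<partial>lborel)"
    using norm_ge_zero[of x] by (intro nn_integral_cong) (auto simp: indicator_def dest: order_trans[OF norm_ge_zero])
  also have "\<dots> = ennreal (0 - (- exp (-(norm x)\<^sup>2)))"
  proof (rule nn_integral_FTC_atLeast)
    show "(\<lambda>r::real. 2*r*exp(-r\<^sup>2)) \<in> borel_measurable borel" by measurable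
    show "((\<lambda>r::real. - exp (- r\<^sup>2)) \<longlongrightarrow> 0) at_top" by real_asymp
    fix r :: real assume "norm x \<le> r"
    then have r: "0 \<le> r" using norm_ge_zero order_trans by blast
    show "0 \<le> 2*r*exp(-r\<^sup>2)" using r by simp
    show "((\<lambda>r. - exp (- r\<^sup>2)) has_real_derivative 2*r*exp(-r\<^sup>2)) (at r)"
      by (auto intro!: derivative_eq_intros simp: power2_eq_square)
  qed
  finally show ?thesis by simp
qed

lemma inv_layer_in:
  assumes "0 < norm x" "norm (x::'a::euclidean_space) \<le> 1"
  shows "(\<integral>\<^sup>+ r. (ennreal (1/r\<^sup>2) * indicator {0<..1} r) * indicator {0..} r * indicator (cball 0 r) x \<partial>lborel) =
   ennreal (1 / norm x - 1)"
proof -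
  have "(\<integral>\<^sup>+ r. (ennreal (1/r\<^sup>2) * indicator {0<..1} r) * indicator {0..} r * indicator (cball 0 r) x \<partial>lborel) =
        (\<integral>\<^sup>+ r. ennreal (1/r\<^sup>2) * indicator {norm x..1} r \<partial>lborel)"
    using assms norm_ge_zero[of x] by (intro nn_integral_cong) (auto simp: indicator_def dest: order_trans[OF norm_ge_zero])
  also have "\<dots> = ennreal ((- 1 / 1) - (- 1 / norm x))"
  proof (rule nn_integral_FTC_Icc)
    show "(\<lambda>r::real. 1/r\<^sup>2) \<in> borel_measurable borel" by measurable
    show "norm x \<le> 1" by fact
    fix r :: real assume "r \<in> {norm x..1}"
    then have "norm x \<le> r" by simp
    then have r: "0 < r" using assms(1) by linarith
    show "0 \<le> 1/r\<^sup>2" by simp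
    show "((\<lambda>r. - 1 / r) has_real_derivative 1/r\<^sup>2) (at r)"
      using r by (auto intro!: derivative_eq_intros simp: power2_eq_square)
  qed
  finally show ?thesis by simp
qed

lemma inv_layer_out:
  assumes "norm (x::'a::euclidean_space) > 1"
  shows "(\<integral>\<^sup>+ r. (ennreal (1/r\<^sup>2) * indicator {0<..1} r) * indicator {0..} r * indicator (cball 0 r) x \<partial>lborel) = 0"
proof -
  have "(\<integral>\<^sup>+ r. (ennreal (1/r\<^sup>2) * indicator {0<..1} r) * indicator {0..} r * indicator (cball 0 r) x \<partial>lborel) =
        (\<integral>\<^sup>+ r. 0 \<partial>(lborel::real measure))"
    using assms by (intro nn_integral_cong) (auto simp: indicator_def)
  then show ?thesis by simp
qed



lemma pred_cball_pair[measurable]: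
  "Measurable.pred (borel \<Otimes>\<^sub>M borel) (\<lambda>x::'a::euclidean_space \<times> real. fst x \<in> cball 0 (snd x))"
  unfolding mem_cball_0 by measurable

lemma fmin_hom: "c > 0 \<Longrightarrow> ennreal (fmin (c *\<^sub>R x)) = ennreal (c^1) * ennreal (fmin x)"
  by (simp add: fmin_scale ennreal_mult')

lemma H_eq:
  "(\<integral>\<^sup>+ x. ennreal (fmin x / norm x) * indicator (cball 0 1) x \<partial>(lborel::'a::euclidean_space measure)) =
   (1 + ennreal (1 / DIM('a))) * (\<integral>\<^sup>+ x. ennreal (fmin (x::'a)) * indicator (cball 0 1) x \<partial>lborel)"
proof -
  let ?n = "DIM('a)"
  let ?W = "\<lambda>r::real. ennreal (1/r\<^sup>2) * indicator {0<..1} r"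
  let ?K = "\<integral>\<^sup>+ x. ennreal (fmin (x::'a)) * indicator (cball 0 1) x \<partial>lborel"
  let ?I = "\<lambda>x::'a. \<integral>\<^sup>+ r. ?W r * indicator {0..} r * indicator (cball 0 r) x \<partial>lborel"
  have pt: "ennreal (fmin x / norm x) * indicator (cball 0 1) x =
            ennreal (fmin x) * indicator (cball 0 1) x + ennreal (fmin x) * ?I x" for x :: 'a
  proof -
    consider "x = 0" | "norm x > 1" | "0 < norm x" "norm x \<le> 1" by force
    then show ?thesis
    proof cases
      case 2
      then show ?thesis using inv_layer_out[OF 2] by (simp add: indicator_def)
    next
      case 3
      have a: "0 \<le> 1 / norm x - 1" using 3 by (simp add: field_simps)
      have "ennreal (fmin x / norm x) = ennreal (fmin x + fmin x * (1 / norm x - 1))"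
        using 3 by (simp add: field_simps)
      also have "ennreal (fmin x + fmin x * (1 / norm x - 1)) = ennreal (fmin x) + ennreal (fmin x * (1 / norm x - 1))"
        using a fmin_nonneg[of x] by (intro ennreal_plus) simp_all
      also have "ennreal (fmin x * (1 / norm x - 1)) = ennreal (fmin x) * ennreal (1 / norm x - 1)"
        using a fmin_nonneg[of x] by (intro ennreal_mult) simp_all
      finally have "ennreal (fmin x / norm x) = ennreal (fmin x) + ennreal (fmin x) * ennreal (1 / norm x - 1)" .
      then show ?thesis using inv_layer_in[OF 3] 3 by (simp add: indicator_def)
    qed simp
  qed
  have "(\<integral>\<^sup>+ x. ennreal (fmin x / norm x) * indicator (cball 0 1) x \<partial>(lborel::'a::euclidean_space measure)) =
        (\<integral>\<^sup>+ x. ennreal (fmin x) * indicator (cball 0 1) x + ennreal (fmin x) * ?I x \<partial>lborel)"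
    by (rule nn_integral_cong) (rule pt)
  also have "\<dots> = ?K + (\<integral>\<^sup>+ x. ennreal (fmin x) * ?I x \<partial>lborel)"
    by (rule nn_integral_add) measurable
  also have "(\<integral>\<^sup>+ x. ennreal (fmin x) * ?I x \<partial>lborel) =
     (\<integral>\<^sup>+ r. ?W r * indicator {0..} r * ennreal (r^(?n+1)) \<partial>lborel) * ?K"
    by (rule radial[where k=1]) (simp_all add: fmin_hom)
  also have "(\<integral>\<^sup>+ r. ?W r * indicator {0..} r * ennreal (r^(?n+1)) \<partial>lborel) =
             (\<integral>\<^sup>+ r. ennreal (r^(?n-1)) * indicator {0..1} r \<partial>lborel)"
  proof (rule nn_integral_cong_AE)
    show "AE r in lborel. ?W r * indicator {0..} r * ennreal (r^(?n+1)) = ennreal (r^(?n-1)) * indicator {0..1} r"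
      using AE_lborel_singleton[of "0::real"]
    proof eventually_elim
      case (elim r)
      show ?case
      proof (cases "0 < r \<and> r \<le> 1")
        case True
        have "r^(?n+1) = r^(?n-1) * r\<^sup>2"
        proof -
          have e: "?n + 1 = (?n - 1) + 2" using DIM_positive[where 'a='a] by linarith
          show ?thesis by (subst e) (simp only: power_add)
        qed
        then have "1/r\<^sup>2 * r^(?n+1) = r^(?n-1)" using True by simp
        then show ?thesis using True by (simp add: indicator_def ennreal_mult''[symmetric])
      next
        case False
        then show ?thesis using elim by (auto simp: indicator_def)
      qed
    qed
  qed
  also have "\<dots> = ennreal (1^?n / ?n - 0^?n / ?n)"
  proof (rule nn_integral_FTC_Icc)
    show "(\<lambda>r::real. r^(?n-1)) \<in> borel_measurable borel" by measurable
    fix r :: real assume r: "r \<in> {0..1}"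
    show "0 \<le> r^(?n-1)" using r by simp
    show "((\<lambda>r. r^?n / ?n) has_real_derivative r^(?n-1)) (at r)"
      using DIM_positive[where 'a='a] by (auto intro!: derivative_eq_intros)
  qed simp
  also have "ennreal (1^?n / ?n - 0^?n / ?n) = ennreal (1 / ?n)"
    using DIM_positive[where 'a='a] by (simp add: zero_power)
  finally show ?thesis by (simp add: distrib_right)
qed

lemma gauss_fmin:
  "(\<integral>\<^sup>+ x. ennreal (fmin x) * ennreal (exp (-(norm x)\<^sup>2)) \<partial>(lborel::'a::euclidean_space measure)) =
   (\<integral>\<^sup>+ r. ennreal (2*r*exp(-r\<^sup>2)) * indicator {0..} r * ennreal (r^(DIM('a)+1)) \<partial>lborel) *
   (\<integral>\<^sup>+ x. ennreal (fmin (x::'a)) * indicator (cball 0 1) x \<partial>lborel)"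
  unfolding gauss_layer[symmetric]
  by (rule radial[where k=1]) (simp_all add: fmin_hom)

lemma gauss_vol:
  "(\<integral>\<^sup>+ x. ennreal (exp (-(norm x)\<^sup>2)) \<partial>(lborel::'a::euclidean_space measure)) =
   (\<integral>\<^sup>+ r. ennreal (2*r*exp(-r\<^sup>2)) * indicator {0..} r * ennreal (r^DIM('a)) \<partial>lborel) *
   emeasure lborel (cball (0::'a) 1)"
proof -
  have "(\<integral>\<^sup>+ x. ennreal (exp (-(norm x)\<^sup>2)) \<partial>(lborel::'a measure)) =
        (\<integral>\<^sup>+ x. (\<lambda>_. 1) x * (\<integral>\<^sup>+ r. ennreal (2*r*exp(-r\<^sup>2)) * indicator {0..} r * indicator (cball 0 r) x \<partial>lborel) \<partial>(lborel::'a measure))"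
    unfolding gauss_layer by simp
  also have "\<dots> = (\<integral>\<^sup>+ r. ennreal (2*r*exp(-r\<^sup>2)) * indicator {0..} r * ennreal (r^(DIM('a)+0)) \<partial>lborel) *
     (\<integral>\<^sup>+ x. (\<lambda>_. 1) x * indicator (cball 0 1) x \<partial>(lborel::'a measure))"
    by (rule radial[where k=0]) simp_all
  finally show ?thesis by simp
qed



lemma Gamma_half_nat: "Gamma (real k + 1/2) = sqrt pi * fact (2*k) / (2^(2*k) * fact k)"
proof (induction k)
  case 0
  then show ?case by (simp add: Gamma_one_half_real)
next
  case (Suc k)
  have nz: "real k + 1/2 \<notin> \<int>\<^sub>\<le>\<^sub>0"
  proof
    assume "real k + 1/2 \<in> \<int>\<^sub>\<le>\<^sub>0"
    then obtain z :: int where "real k + 1/2 = of_int z" by (auto elim!: nonpos_Ints_cases)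
    then have "2 * real k + 1 = 2 * of_int z" by linarith
    then have "2 * int k + 1 = 2 * z" by (simp flip: of_int_eq_iff)
    then show False by presburger
  qed
  have "Gamma (real (Suc k) + 1/2) = Gamma ((real k + 1/2) + 1)" by (simp add: add_ac)
  also have "\<dots> = (real k + 1/2) * Gamma (real k + 1/2)" by (rule Gamma_plus1[OF nz])
  also have "\<dots> = (real k + 1/2) * (sqrt pi * fact (2*k) / (2^(2*k) * fact k))" by (simp add: Suc.IH)
  also have "\<dots> = sqrt pi * fact (2 * Suc k) / (2^(2 * Suc k) * fact (Suc k))"
  proof -
    have e1: "(fact (2 * Suc k) :: real) = (2*real k+2)*(2*real k+1)*fact(2*k)"
      by (simp add: fact_Suc algebra_simps)
    have e2: "(2::real)^(2 * Suc k) = 4 * 2^(2*k)" by simp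
    have e3: "(fact (Suc k) :: real) = (real k + 1) * fact k" by (simp add: fact_Suc)
    have pos: "(fact k :: real) > 0" "(2::real)^(2*k) > 0" by simp_all
    show ?thesis unfolding e1 e2 e3 using pos
      by (simp add: divide_simps) (simp add: algebra_simps)
  qed
  finally show ?case .
qed

lemma hb_nn:
  fixes f :: "real \<Rightarrow> real"
  assumes "has_bochner_integral lborel f c" "\<And>x. 0 \<le> f x"
  shows "(\<integral>\<^sup>+ x. ennreal (f x) \<partial>lborel) = ennreal c"
proof -
  have "integrable lborel f" "integral\<^sup>L lborel f = c" using assms(1) by (auto simp: has_bochner_integral_iff)
  then show ?thesis using assms(2) by (subst nn_integral_eq_integral) auto
qed

lemma gmom:
  "(\<integral>\<^sup>+ r. ennreal (2*r*exp(-r\<^sup>2)) * indicator {0..} r * ennreal (r^m) \<partial>lborel) =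
   ennreal (Gamma ((real m + 2)/2))"
proof -
  have "(\<integral>\<^sup>+ r. ennreal (2*r*exp(-r\<^sup>2)) * indicator {0..} r * ennreal (r^m) \<partial>lborel) =
        (\<integral>\<^sup>+ r. ennreal (2 * (indicator {0..} r *\<^sub>R (exp (-r\<^sup>2) * r^(m+1)))) \<partial>lborel)"
    by (intro nn_integral_cong) (auto simp: indicator_def ennreal_mult''[symmetric] mult_ac)
  also have "\<dots> = ennreal (Gamma ((real m + 2)/2))"
  proof (cases "even m")
    case True
    then obtain k where m: "m = 2*k" by (auto elim: evenE)
    have "has_bochner_integral lborel (\<lambda>r. (2::real) * (indicator {0..} r *\<^sub>R (exp (-r\<^sup>2) * r^(2*k+1)))) (2 * (fact k / 2))"
      by (intro has_bochner_integral_mult_right gaussian_moment_odd_pos)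
    then have "(\<integral>\<^sup>+ r. ennreal (2 * (indicator {0..} r *\<^sub>R (exp (-r\<^sup>2) * r^(2*k+1)))) \<partial>lborel) = ennreal (2 * (fact k / 2))"
      by (rule hb_nn) (auto simp: indicator_def)
    moreover have "(real m + 2)/2 = 1 + real k" using m by simp
    moreover have "Gamma ((real m + 2)/2) = fact k"
      using Gamma_fact[of k, where 'a=real] by (subst calculation(2)) simp
    ultimately show ?thesis using m by simp
  next
    case False
    then obtain k where m: "m + 1 = 2*k" by (metis evenE odd_Suc_div_two odd_two_times_div_two_succ Suc_eq_plus1 even_Suc)
    have "has_bochner_integral lborel (\<lambda>r. (2::real) * (indicator {0..} r *\<^sub>R (exp (-r\<^sup>2) * r^(2*k)))) (2 * ((sqrt pi / 2) * (fact (2 * k) / (2 ^ (2 * k) * fact k))))"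
      by (intro has_bochner_integral_mult_right gaussian_moment_even_pos)
    then have "(\<integral>\<^sup>+ r. ennreal (2 * (indicator {0..} r *\<^sub>R (exp (-r\<^sup>2) * r^(2*k)))) \<partial>lborel) =
       ennreal (2 * ((sqrt pi / 2) * (fact (2 * k) / (2 ^ (2 * k) * fact k))))"
      by (rule hb_nn) (auto simp: indicator_def)
    moreover have "Gamma ((real m + 2)/2) = Gamma (real k + 1/2)"
    proof -
      have "real m + 1 = 2 * real k" using m by (metis of_nat_Suc of_nat_mult of_nat_numeral Suc_eq_plus1 add.commute)
      then have "(real m + 2)/2 = real k + 1/2" by (simp add: field_simps)
      then show ?thesis by (rule arg_cong)
    qed
    ultimately show ?thesis using m Gamma_half_nat[of k] by simp
  qed
  finally show ?thesis .
qed



definition Gt :: "real \<Rightarrow> ennreal" where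
  "Gt y = (\<integral>\<^sup>+ t. indicator {t. y < \<bar>t\<bar>} t * ennreal (exp (-t\<^sup>2)) \<partial>lborel)"

lemma Gt_meas[measurable]: "Gt \<in> borel_measurable borel"
proof -
  have "(\<lambda>y. \<integral>\<^sup>+ t. indicator {t. y < \<bar>t\<bar>} t * ennreal (exp (-t\<^sup>2)) \<partial>lborel) \<in> borel_measurable borel"
    by (rule sigma_finite_measure.borel_measurable_nn_integral[OF sigma_finite_lborel]) measurable
  then show ?thesis unfolding Gt_def[abs_def] .
qed

lemma gauss_fmin_layer:
  "(\<integral>\<^sup>+ x. ennreal (fmin x) * ennreal (exp (-(norm x)\<^sup>2)) \<partial>(lborel::'a::euclidean_space measure)) =
   (\<integral>\<^sup>+ y. indicator {0..} y * Gt y ^ DIM('a) \<partial>lborel)"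
proof -
  have "(\<integral>\<^sup>+ x. ennreal (fmin x) * ennreal (exp (-(norm x)\<^sup>2)) \<partial>(lborel::'a measure)) =
        (\<integral>\<^sup>+ x. (\<integral>\<^sup>+ y. indicator {0..} y * (indicator {x. y < fmin x} x * ennreal (exp (-(norm x)\<^sup>2))) \<partial>lborel) \<partial>(lborel::'a measure))"
  proof (rule nn_integral_cong)
    fix x :: 'a
    have "(\<integral>\<^sup>+ y. indicator {0..} y * (indicator {x. y < fmin x} x * ennreal (exp (-(norm x)\<^sup>2))) \<partial>lborel) =
          (\<integral>\<^sup>+ y. ennreal (exp (-(norm x)\<^sup>2)) * indicator {0..<fmin x} y \<partial>lborel)"
      by (intro nn_integral_cong) (auto simp: indicator_def)
    also have "\<dots> = ennreal (exp (-(norm x)\<^sup>2)) * ennreal (fmin x)"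
      using fmin_nonneg[of x] by (simp add: nn_integral_cmult_indicator)
    finally show "ennreal (fmin x) * ennreal (exp (-(norm x)\<^sup>2)) =
          (\<integral>\<^sup>+ y. indicator {0..} y * (indicator {x. y < fmin x} x * ennreal (exp (-(norm x)\<^sup>2))) \<partial>lborel)"
      by (simp add: mult_ac)
  qed
  also have "\<dots> = (\<integral>\<^sup>+ y. (\<integral>\<^sup>+ x. indicator {0..} y * (indicator {x. y < fmin x} x * ennreal (exp (-(norm x)\<^sup>2))) \<partial>(lborel::'a measure)) \<partial>lborel)"
    by (rule lborel_pair.Fubini'[symmetric]) measurable
  also have "\<dots> = (\<integral>\<^sup>+ y. indicator {0..} y * Gt y ^ DIM('a) \<partial>lborel)"
  proof (rule nn_integral_cong)
    fix y :: real
    show "(\<integral>\<^sup>+ x. indicator {0..} y * (indicator {x. y < fmin x} x * ennreal (exp (-(norm x)\<^sup>2))) \<partial>(lborel::'a measure)) =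
          indicator {0..} y * Gt y ^ DIM('a)"
    proof (cases "0 \<le> y")
      case False
      then show ?thesis by simp
    next
      case True
      have "(\<integral>\<^sup>+ x. indicator {0..} y * (indicator {x. y < fmin x} x * ennreal (exp (-(norm x)\<^sup>2))) \<partial>(lborel::'a measure)) =
            (\<integral>\<^sup>+ x. (\<Prod>b\<in>Basis. indicator {t. y < \<bar>t\<bar>} (x \<bullet> b) * ennreal (exp (-(x \<bullet> b)\<^sup>2))) \<partial>(lborel::'a measure))"
      proof (rule nn_integral_cong)
        fix x :: 'a
        have nx: "exp (-(norm x)\<^sup>2) = (\<Prod>b\<in>Basis. exp (-(x \<bullet> b)\<^sup>2))"
        proof -
          have "(norm x)\<^sup>2 = (\<Sum>b\<in>Basis. (x \<bullet> b)\<^sup>2)"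
            by (simp add: norm_eq_sqrt_inner euclidean_inner[of x x] power2_eq_square sum_nonneg)
          then show ?thesis by (simp add: exp_sum[symmetric] sum_negf)
        qed
        have fm: "y < fmin x \<longleftrightarrow> (\<forall>b\<in>Basis. y < \<bar>x \<bullet> b\<bar>)"
          unfolding fmin_def by (subst Min_gr_iff) auto
        show "indicator {0..} y * (indicator {x. y < fmin x} x * ennreal (exp (-(norm x)\<^sup>2))) =
              (\<Prod>b\<in>Basis. indicator {t. y < \<bar>t\<bar>} (x \<bullet> b) * ennreal (exp (-(x \<bullet> b)\<^sup>2)))"
        proof (cases "\<forall>b\<in>Basis. y < \<bar>x \<bullet> b\<bar>")
          case True
          then show ?thesis using \<open>0 \<le> y\<close> fm nx by (simp add: prod_ennreal)
        next
          case False
          then obtain b where b: "b \<in> Basis" "\<not> y < \<bar>x \<bullet> b\<bar>" by blast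
          then have "(\<Prod>b\<in>Basis. indicator {t. y < \<bar>t\<bar>} (x \<bullet> b) * ennreal (exp (-(x \<bullet> b)\<^sup>2))) = 0"
            by (intro prod_zero) (auto intro!: bexI[OF _ b(1)] simp: b(2))
          then show ?thesis using False fm by simp
        qed
      qed
      also have "\<dots> = (\<Prod>b\<in>(Basis::'a set). Gt y)"
        unfolding Gt_def by (rule nn_integral_lborel_prod) auto
      also have "\<dots> = indicator {0..} y * Gt y ^ DIM('a)"
        using True by simp
      finally show ?thesis .
    qed
  qed
  finally show ?thesis .
qed



lemma gauss_full: "(\<integral>\<^sup>+ t. ennreal (exp (-t\<^sup>2)) \<partial>lborel) = ennreal (sqrt pi)"
proof -
  have "has_bochner_integral lborel (\<lambda>x. exp (- x\<^sup>2)) (2 *\<^sub>R (sqrt pi / 2))"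
    by (rule has_bochner_integral_even_function[OF gaussian_moment_0]) simp
  then show ?thesis by (subst hb_nn) auto
qed

lemma E_nn:
  assumes "0 \<le> y"
  shows "(\<integral>\<^sup>+ t. indicator {-y..y} t * ennreal (exp (-t\<^sup>2)) \<partial>lborel) = ennreal (LBINT x=-y..y. exp (- (x ^ 2)))"
proof -
  have i: "integrable lborel (\<lambda>x. exp (- (x ^ 2)) * indicator {-y..y} x)"
    by (rule borel_integrable_atLeastAtMost) (auto intro!: continuous_intros)
  have "(LBINT x=-y..y. exp (- (x ^ 2))) = (LBINT x:{-y..y}. exp (- (x ^ 2)))"
    using assms by (simp add: interval_integral_Icc)
  also have "\<dots> = integral\<^sup>L lborel (\<lambda>x. exp (- (x ^ 2)) * indicator {-y..y} x)"
    unfolding set_lebesgue_integral_def by (simp add: mult_ac)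
  finally have e: "(LBINT x=-y..y. exp (- (x ^ 2))) = integral\<^sup>L lborel (\<lambda>x. exp (- (x ^ 2)) * indicator {-y..y} x)" .
  have "(\<integral>\<^sup>+ t. indicator {-y..y} t * ennreal (exp (-t\<^sup>2)) \<partial>lborel) =
        (\<integral>\<^sup>+ t. ennreal (exp (- (t ^ 2)) * indicator {-y..y} t) \<partial>lborel)"
    by (intro nn_integral_cong) (auto simp: indicator_def)
  also have "\<dots> = ennreal (integral\<^sup>L lborel (\<lambda>x. exp (- (x ^ 2)) * indicator {-y..y} x))"
    by (rule nn_integral_eq_integral[OF i]) auto
  finally show ?thesis using e by simp
qed

lemma Gt_eq:
  assumes "0 \<le> y"
  shows "Gt y = ennreal (sqrt pi - (LBINT x=-y..y. exp (- (x ^ 2))))"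
    and "0 \<le> (LBINT x=-y..y. exp (- (x ^ 2)))" "(LBINT x=-y..y. exp (- (x ^ 2))) \<le> sqrt pi"
proof -
  let ?E = "LBINT x=-y..y. exp (- (x ^ 2))"
  have "ennreal (sqrt pi) = (\<integral>\<^sup>+ t. indicator {t. y < \<bar>t\<bar>} t * ennreal (exp (-t\<^sup>2)) + indicator {-y..y} t * ennreal (exp (-t\<^sup>2)) \<partial>lborel)"
    unfolding gauss_full[symmetric] by (intro nn_integral_cong) (auto simp: indicator_def)
  also have "\<dots> = Gt y + ennreal ?E"
    unfolding Gt_def E_nn[OF assms, symmetric] by (rule nn_integral_add) measurable
  finally have sum: "ennreal (sqrt pi) = Gt y + ennreal ?E" .
  have E0: "0 \<le> ?E"
    using assms by (simp add: interval_integral_Icc set_lebesgue_integral_def)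
  have Ele: "?E \<le> sqrt pi"
  proof -
    have "ennreal ?E \<le> ennreal (sqrt pi)" unfolding sum by simp
    then show ?thesis using pi_gt_zero by (auto simp: ennreal_le_iff2)
  qed
  show "0 \<le> ?E" by fact
  show "?E \<le> sqrt pi" by fact
  have "Gt y = ennreal (sqrt pi) - ennreal ?E"
    unfolding sum by simp
  also have "\<dots> = ennreal (sqrt pi - ?E)" using E0 by (rule ennreal_minus)
  finally show "Gt y = ennreal (sqrt pi - ?E)" .
qed



lemma space_sphere_surface: "space (sphere_surface :: 'a::euclidean_space measure) = sphere 0 1"
  by (subst sphere_surface_eq) (simp add: space_restrict_space)

lemma sets_sphere_surface: "sets (sphere_surface :: 'a::euclidean_space measure) = sets (restrict_space borel (sphere 0 1))"
  by (subst sphere_surface_eq) simp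

lemma nn_sphere:
  fixes g :: "'a::euclidean_space \<Rightarrow> ennreal"
  assumes g[measurable]: "g \<in> borel_measurable borel"
  shows "(\<integral>\<^sup>+ x. g x \<partial>(sphere_surface::'a measure)) =
         of_nat DIM('a) * (\<integral>\<^sup>+ x. g (sgn x) * indicator (cball 0 1 - {0}) x \<partial>lborel)"
proof -
  let ?S = "sphere (0::'a) 1" and ?P = "cball (0::'a) 1 - {0}"
  have meas: "sgn \<in> restrict_space lborel ?P \<rightarrow>\<^sub>M restrict_space borel ?S"
  proof (rule measurable_restrict_space2)
    show "sgn \<in> space (restrict_space lborel ?P) \<rightarrow> ?S"
      by (auto simp: space_restrict_space norm_sgn)
    have "sgn \<in> lborel \<rightarrow>\<^sub>M borel" using sgn_meas by simp
    then show "sgn \<in> restrict_space lborel ?P \<rightarrow>\<^sub>M borel"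
      by (rule measurable_restrict_space1)
  qed
  have gm: "g \<in> borel_measurable (restrict_space borel ?S)"
    by (rule measurable_restrict_space1) simp
  have gm': "g \<in> borel_measurable (distr (restrict_space lborel ?P) (restrict_space borel ?S) sgn)"
    using gm by simp
  have "(\<integral>\<^sup>+ x. g x \<partial>(sphere_surface::'a measure)) =
        (\<integral>\<^sup>+ x. g x \<partial>density (distr (restrict_space lborel ?P) (restrict_space borel ?S) sgn) (\<lambda>_. of_nat DIM('a)))"
    by (subst sphere_surface_eq) (rule refl)
  also have "\<dots> = (\<integral>\<^sup>+ x. of_nat DIM('a) * g x \<partial>distr (restrict_space lborel ?P) (restrict_space borel ?S) sgn)"
    by (rule nn_integral_density) (simp_all add: gm gm')
  also have "\<dots> = of_nat DIM('a) * (\<integral>\<^sup>+ x. g x \<partial>distr (restrict_space lborel ?P) (restrict_space borel ?S) sgn)"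
    by (rule nn_integral_cmult) (rule gm')
  also have "(\<integral>\<^sup>+ x. g x \<partial>distr (restrict_space lborel ?P) (restrict_space borel ?S) sgn) =
             (\<integral>\<^sup>+ x. g (sgn x) \<partial>restrict_space lborel ?P)"
    by (rule nn_integral_distr[OF meas gm'])
  also have "\<dots> = (\<integral>\<^sup>+ x. g (sgn x) * indicator ?P x \<partial>lborel)"
    by (rule nn_integral_restrict_space) simp
  finally show ?thesis .
qed

lemma sphere_fmin:
  "(\<integral>\<^sup>+ x. ennreal (fmin x) \<partial>(sphere_surface::'a::euclidean_space measure)) =
   of_nat DIM('a) * (\<integral>\<^sup>+ x. ennreal (fmin x / norm x) * indicator (cball 0 1) x \<partial>(lborel::'a measure))"
proof -
  have "(\<integral>\<^sup>+ x. ennreal (fmin x) \<partial>(sphere_surface::'a measure)) =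
        of_nat DIM('a) * (\<integral>\<^sup>+ x. ennreal (fmin (sgn x)) * indicator (cball 0 1 - {0}) x \<partial>(lborel::'a measure))"
    by (rule nn_sphere) measurable
  also have "(\<integral>\<^sup>+ x. ennreal (fmin (sgn x)) * indicator (cball 0 1 - {0}) x \<partial>(lborel::'a measure)) =
             (\<integral>\<^sup>+ x. ennreal (fmin x / norm x) * indicator (cball 0 1) x \<partial>(lborel::'a measure))"
  proof (rule nn_integral_cong)
    fix x :: 'a
    show "ennreal (fmin (sgn x)) * indicator (cball 0 1 - {0}) x = ennreal (fmin x / norm x) * indicator (cball 0 1) x"
    proof (cases "x = 0")
      case False
      have "fmin (sgn x) = fmin x / norm x"
        unfolding sgn_div_norm using fmin_scale[of "inverse (norm x)" x] by (simp add: divide_inverse mult.commute)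
      then show ?thesis using False by (simp add: indicator_def)
    qed simp
  qed
  finally show ?thesis .
qed

lemma sphere_vol:
  "emeasure (sphere_surface::'a::euclidean_space measure) (sphere 0 1) =
   of_nat DIM('a) * emeasure lborel (cball (0::'a) 1)"
proof -
  have "emeasure (sphere_surface::'a measure) (sphere 0 1) = (\<integral>\<^sup>+ x. 1 \<partial>(sphere_surface::'a measure))"
    by (simp add: space_sphere_surface)
  also have "\<dots> = of_nat DIM('a) * (\<integral>\<^sup>+ x. 1 * indicator (cball 0 1 - {0}) x \<partial>(lborel::'a measure))"
    by (rule nn_sphere) simp
  also have "(\<integral>\<^sup>+ x. 1 * indicator (cball 0 1 - {0}) x \<partial>(lborel::'a measure)) = (\<integral>\<^sup>+ x. indicator (cball 0 1) x \<partial>(lborel::'a measure))"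
    by (rule nn_integral_cong_AE) (use AE_lborel_singleton[of "0::'a"] in \<open>auto elim!: eventually_mono simp: indicator_def\<close>)
  finally show ?thesis by simp
qed


lemma alg: fixes N a b p R :: real
  assumes "N > 0" "a > 0" "b > 0" "p > 0"
  shows "((N+1) * (p*R/(((N+1)/2)*b))) / (N * (p/((N/2)*a))) = a/b*R"
proof -
  have nz: "b + N * b \<noteq> 0" "N * b + b \<noteq> 0" "1 + N \<noteq> 0" using assms mult_pos_pos[of N b] by linarith+
  have e1: "(N+1) * (p*R/(((N+1)/2)*b)) = 2*p*R/b" using assms nz by (simp add: field_simps)
  have e2: "N * (p/((N/2)*a)) = 2*p/a" using assms by (simp add: field_simps)
  show ?thesis unfolding e1 e2 using assms by (simp add: field_simps)
qed

lemma exp_norm_prod: "exp (-(norm (x::'a::euclidean_space))\<^sup>2) = (\<Prod>b\<in>Basis. exp (-(x \<bullet> b)\<^sup>2))"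
proof -
  have "(norm x)\<^sup>2 = (\<Sum>b\<in>Basis. (x \<bullet> b)\<^sup>2)"
    by (simp add: norm_eq_sqrt_inner euclidean_inner[of x x] power2_eq_square sum_nonneg)
  then show ?thesis by (simp add: exp_sum[symmetric] sum_negf)
qed

lemma gauss_total: "(\<integral>\<^sup>+ x. ennreal (exp (-(norm x)\<^sup>2)) \<partial>(lborel::'a::euclidean_space measure)) = ennreal (sqrt pi ^ DIM('a))"
proof -
  have "(\<integral>\<^sup>+ x. ennreal (exp (-(norm x)\<^sup>2)) \<partial>(lborel::'a measure)) =
        (\<integral>\<^sup>+ x. (\<Prod>b\<in>Basis. ennreal (exp (-(x \<bullet> b)\<^sup>2))) \<partial>(lborel::'a measure))"
    by (intro nn_integral_cong) (simp add: exp_norm_prod prod_ennreal)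
  also have "\<dots> = (\<Prod>b\<in>(Basis::'a set). (\<integral>\<^sup>+ t. ennreal (exp (-t\<^sup>2)) \<partial>lborel))"
    by (rule nn_integral_lborel_prod) auto
  also have "\<dots> = ennreal (sqrt pi ^ DIM('a))"
    by (simp add: gauss_full ennreal_power)
  finally show ?thesis .
qed

lemma main_generic:
  "integral\<^sup>L (sphere_surface::'a::euclidean_space measure) fmin / measure (sphere_surface::'a measure) (sphere 0 1) =
    Gamma (real DIM('a) / 2) / Gamma ((real DIM('a) + 1) / 2) *
    (LBINT y:{0..}. (1 - (1 / sqrt pi) * (LBINT x=-y..y. exp (- (x ^ 2)))) ^ DIM('a))"
proof -
  define n where "n = DIM('a)"
  have n0: "n > 0" unfolding n_def by simp
  define K where "K = (\<integral>\<^sup>+ x. ennreal (fmin x) * indicator (cball 0 1) x \<partial>(lborel::'a measure))"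
  define V where "V = emeasure lborel (cball (0::'a) 1)"
  define E where "E = (\<lambda>y::real. LBINT x=-y..y. exp (- (x ^ 2)))"
  define g where "g = (\<lambda>y::real. (1 - (1 / sqrt pi) * E y) ^ n)"
  define R where "R = (LBINT y:{0..}. g y)"
  define G2 where "G2 = Gamma ((real n + 2) / 2)"
  define G3 where "G3 = Gamma ((real (n + 1) + 2) / 2)"
  have sp: "sqrt pi > 0" by simp
  have Vfin: "V < \<infinity>" unfolding V_def by (rule emeasure_lborel_cball_finite)
  have "K \<le> (\<integral>\<^sup>+ x. indicator (cball 0 1) x \<partial>(lborel::'a measure))"
    unfolding K_def
  proof (rule nn_integral_mono)
    fix x :: 'a
    have "fmin x \<le> 1" if "x \<in> cball 0 1" using fmin_le_norm[of x] that by simp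
    then show "ennreal (fmin x) * indicator (cball 0 1) x \<le> indicator (cball 0 1) x"
      by (auto simp: indicator_def)
  qed
  then have Kfin: "K < \<infinity>" using Vfin unfolding V_def by simp
  define k where "k = enn2real K"
  define v where "v = enn2real V"
  have Kk: "K = ennreal k" and k0: "0 \<le> k" using Kfin unfolding k_def by simp_all
  have Vv: "V = ennreal v" and v0: "0 \<le> v" using Vfin unfolding v_def by simp_all
  have E: "0 \<le> E y" "E y \<le> sqrt pi" "Gt y = ennreal (sqrt pi - E y)" if "0 \<le> y" for y
    using Gt_eq[OF that] unfolding E_def by simp_all
  have d: "ennreal (sqrt pi ^ n) = ennreal G2 * V"
    using gauss_total[where 'a='a] gauss_vol[where 'a='a] gmom[of n]
    unfolding n_def V_def G2_def by simp
  have c: "(\<integral>\<^sup>+ x. ennreal (fmin x) * ennreal (exp (-(norm x)\<^sup>2)) \<partial>(lborel::'a measure)) = ennreal G3 * K"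
    using gauss_fmin[where 'a='a] gmom[of "n+1"] unfolding n_def K_def G3_def by simp
  (* the measurable version of g *)
  define h where "h = (\<lambda>y. indicator {0..} y * (enn2real (Gt y) / sqrt pi) ^ n)"
  have hm[measurable]: "h \<in> borel_measurable borel" unfolding h_def by measurable
  have hg: "h y = indicator {0..} y * g y" for y
  proof (cases "0 \<le> y")
    case True
    have "enn2real (Gt y) / sqrt pi = 1 - (1 / sqrt pi) * E y"
      using E[OF True] sp by (simp add: field_simps)
    then show ?thesis unfolding h_def g_def by simp
  qed (simp add: h_def)
  have h0: "0 \<le> h y" for y unfolding h_def by simp
  have e: "(\<integral>\<^sup>+ x. ennreal (fmin x) * ennreal (exp (-(norm x)\<^sup>2)) \<partial>(lborel::'a measure)) =
           ennreal (sqrt pi ^ n) * (\<integral>\<^sup>+ y. ennreal (h y) \<partial>lborel)"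
  proof -
    have "(\<integral>\<^sup>+ x. ennreal (fmin x) * ennreal (exp (-(norm x)\<^sup>2)) \<partial>(lborel::'a measure)) =
          (\<integral>\<^sup>+ y. indicator {0..} y * Gt y ^ n \<partial>lborel)"
      unfolding n_def by (rule gauss_fmin_layer)
    also have "\<dots> = (\<integral>\<^sup>+ y. ennreal (sqrt pi ^ n) * ennreal (h y) \<partial>lborel)"
    proof (rule nn_integral_cong)
      fix y :: real
      show "indicator {0..} y * Gt y ^ n = ennreal (sqrt pi ^ n) * ennreal (h y)"
      proof (cases "0 \<le> y")
        case True
        have hy: "h y = (enn2real (Gt y) / sqrt pi) ^ n" using True unfolding h_def by simp
        have "Gt y ^ n = ennreal ((sqrt pi - E y) ^ n)"
          using E[OF True] by (simp add: ennreal_power)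
        also have "(sqrt pi - E y) ^ n = sqrt pi ^ n * h y"
        proof -
          have "sqrt pi - E y = sqrt pi * (enn2real (Gt y) / sqrt pi)"
            using E[OF True] sp by simp
          then show ?thesis unfolding hy using sp by (simp add: power_divide)
        qed
        also have "ennreal (sqrt pi ^ n * h y) = ennreal (sqrt pi ^ n) * ennreal (h y)"
          using h0[of y] by (intro ennreal_mult) simp_all
        finally show ?thesis using True by simp
      qed (simp add: h_def)
    qed
    also have "\<dots> = ennreal (sqrt pi ^ n) * (\<integral>\<^sup>+ y. ennreal (h y) \<partial>lborel)"
      by (rule nn_integral_cmult) simp
    finally show ?thesis .
  qed
  have Jfin: "(\<integral>\<^sup>+ y. ennreal (h y) \<partial>lborel) < \<infinity>"
  proof -
    have "ennreal (sqrt pi ^ n) * (\<integral>\<^sup>+ y. ennreal (h y) \<partial>lborel) < \<infinity>"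
      using c e Kk by (simp add: ennreal_mult_less_top)
    then show ?thesis using sp by (auto simp: ennreal_mult_less_top)
  qed
  have hint: "integrable lborel h"
    by (rule integrableI_nonneg) (use Jfin h0 in auto)
  have J: "(\<integral>\<^sup>+ y. ennreal (h y) \<partial>lborel) = ennreal R"
  proof -
    have "R = integral\<^sup>L lborel h"
    proof -
      have hfun: "h = (\<lambda>y. indicator {0..} y * g y)" by (rule ext) (rule hg)
      show ?thesis unfolding R_def set_lebesgue_integral_def hfun by simp
    qed
    then show ?thesis using nn_integral_eq_integral[OF hint] h0 by simp
  qed
  have R0: "0 \<le> R"
    unfolding R_def set_lebesgue_integral_def using hg h0 by (simp add: integral_nonneg)
  have G2p: "G2 > 0" unfolding G2_def by simp
  have G3p: "G3 > 0" unfolding G3_def by simp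
  have eq1: "sqrt pi ^ n * R = G3 * k"
  proof -
    have "ennreal (sqrt pi ^ n * R) = ennreal (G3 * k)"
      using c e J Kk R0 k0 G3p by (simp add: ennreal_mult)
    then show ?thesis using R0 k0 G3p by (subst (asm) ennreal_inj) auto
  qed
  have eq2: "sqrt pi ^ n = G2 * v"
  proof -
    have "ennreal (sqrt pi ^ n) = ennreal (G2 * v)"
      using d Vv v0 G2p by (simp add: ennreal_mult)
    then show ?thesis using v0 G2p by (subst (asm) ennreal_inj) auto
  qed
  have num: "integral\<^sup>L (sphere_surface::'a measure) fmin = (real n + 1) * k"
  proof -
    have fm: "fmin \<in> borel_measurable (sphere_surface::'a measure)"
    proof -
      have "fmin \<in> borel_measurable (restrict_space borel (sphere (0::'a) 1))"
        by (rule measurable_restrict_space1) simp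
      then show ?thesis
        using measurable_cong_sets[OF sets_sphere_surface[where 'a='a] refl, of "borel::real measure"] by simp
    qed
    have "integral\<^sup>L (sphere_surface::'a measure) fmin = enn2real (\<integral>\<^sup>+ x. ennreal (fmin x) \<partial>(sphere_surface::'a measure))"
      by (rule integral_eq_nn_integral) (use fm fmin_nonneg in auto)
    also have "(\<integral>\<^sup>+ x. ennreal (fmin x) \<partial>(sphere_surface::'a measure)) = of_nat n * ((1 + ennreal (1 / n)) * K)"
      unfolding sphere_fmin H_eq K_def n_def ..
    also have "\<dots> = ennreal ((real n + 1) * k)"
    proof -
      have a: "1 + ennreal (1 / n) = ennreal (1 + 1 / n)" by (simp add: ennreal_plus)
      have b: "(of_nat n :: ennreal) = ennreal (real n)" by (simp add: ennreal_of_nat_eq_real_of_nat)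
      have "ennreal (real n) * (ennreal (1 + 1 / n) * ennreal k) = ennreal (real n * ((1 + 1 / n) * k))"
        using k0 by (simp add: ennreal_mult)
      moreover have "real n * ((1 + 1 / n) * k) = (real n + 1) * k" using n0 by (simp add: field_simps)
      ultimately show ?thesis unfolding Kk a b by simp
    qed
    finally show ?thesis using k0 by simp
  qed
  have den: "measure (sphere_surface::'a measure) (sphere 0 1) = real n * v"
    unfolding measure_def sphere_vol using v0 Vv unfolding V_def n_def
    by (simp add: ennreal_of_nat_eq_real_of_nat ennreal_mult[symmetric] enn2real_mult)
  have g2: "G2 = (real n / 2) * Gamma (real n / 2)"
  proof -
    have "G2 = Gamma (real n / 2 + 1)" unfolding G2_def by (simp add: field_simps)
    also have "\<dots> = (real n / 2) * Gamma (real n / 2)"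
      using n0 by (intro Gamma_plus1) (auto elim!: nonpos_Ints_cases)
    finally show ?thesis .
  qed
  have g3: "G3 = ((real n + 1) / 2) * Gamma ((real n + 1) / 2)"
  proof -
    have "G3 = Gamma ((real n + 1) / 2 + 1)" unfolding G3_def by (simp add: field_simps)
    also have "\<dots> = ((real n + 1) / 2) * Gamma ((real n + 1) / 2)"
      by (intro Gamma_plus1) (auto elim!: nonpos_Ints_cases)
    finally show ?thesis .
  qed
  have Gp: "Gamma (real n / 2) > 0" "Gamma ((real n + 1) / 2) > 0" using n0 by simp_all
  have pn: "sqrt pi ^ n > 0" using sp by simp
  have "integral\<^sup>L (sphere_surface::'a measure) fmin / measure (sphere_surface::'a measure) (sphere 0 1) =
        ((real n + 1) * k) / (real n * v)" by (simp add: num den)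
  also have "\<dots> = Gamma (real n / 2) / Gamma ((real n + 1) / 2) * R"
  proof -
    have k: "k = sqrt pi ^ n * R / G3" using eq1 G3p by (simp add: field_simps)
    have v: "v = sqrt pi ^ n / G2" using eq2 G2p by (simp add: field_simps)
    show ?thesis unfolding k v g2 g3 using n0 Gp pn by (intro alg) simp_all
  qed
  finally show ?thesis unfolding R_def g_def E_def n_def .
qed


lemma fmin_cart: "(\<lambda>x::real^'n. Min ((\<lambda>i. \<bar>x $ i\<bar>) ` UNIV)) = fmin"
proof (rule ext)
  fix x :: "real^'n"
  have "(\<lambda>b. \<bar>x \<bullet> b\<bar>) ` Basis = (\<lambda>i. \<bar>x $ i\<bar>) ` UNIV"
    by (auto simp: Basis_vec_def image_iff cart_eq_inner_axis)
  then show "Min ((\<lambda>i. \<bar>x $ i\<bar>) ` UNIV) = fmin x" unfolding fmin_def by simp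
qed

theorem mainTheorem1:
  fixes n :: nat
  assumes "n = CARD('n::finite)"
  shows "Emin TYPE('n) =
    Gamma (real n / 2) / Gamma ((real n + 1) / 2) *
    (LBINT y:{0..}. (1 - (1 / sqrt pi) * (LBINT x=-y..y. exp (- (x ^ 2)))) ^ n)"
  unfolding Emin_def fmin_cart using main_generic[where 'a="real^'n"] assms by simp

end
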